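(* Let $d\ge1$, $N\ge2$, $\alpha\ge1$, $P=(0,N)^d\cap\mathbb{Z}^d$, and let ALG process an arbitrary finite online sequence of sets $O_1\cap P,\dots,O_m\cap P$, where each $O_j\subseteq(0,N)^d$ is open, $\alpha$-fat, with $O_j\cap P\ne\emptyset$. Let $\mathcal{S}'$ be the set of indices $j$ such that $O_j\cap P$ was not hit (i.e. disjoint from ALG's current set $P'$) at its arrival. Then for every integer $l\ge0$ and every $p\in P$, the number of $j\in\mathcal{S}'$ with $\ell(O_j)=l$ and $p\in O_j$ is at most $(4\alpha+1)^d$.
   Context: A $d$-cube is an axis-parallel hypercube; width = side length. In-width of $O$: supremum of widths of $d$-cubes contained in $O$; out-width: infimum of widths of $d$-cubes containing $O$; a nonempty bounded open $O$ is $\alpha$-fat if out-width$(O)\le\alpha\cdot$in-width$(O)$. For a positive integer $i$, $\ell(i)$ is the largest $k\ge0$ with $2^k\mid i$; for $x\in P$, $\ell(x)=\min_i\ell(x_i)$; $\ell(O)=\max\{\ell(x):x\in O\cap P\}$. Algorithm ALG: start with $P'=\emptyset$; when $O\cap P$ arrives, if $O\cap P'\ne\emptyset$ do nothing, otherwise add to $P'$ all points of $O\cap P$ of level $\ell(O)$. *)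

theory Defs
  imports "HOL-Analysis.Analysis" "HOL-Computational_Algebra.Computational_Algebra"
begin

text \<open>Points of R^d are vectors of type real^'n, d = CARD('n).\<close>

definition dcube :: "real^'n \<Rightarrow> real \<Rightarrow> (real^'n) set" where
  "dcube a w = {y. \<forall>i. a$i \<le> y$i \<and> y$i \<le> a$i + w}"

definition in_width :: "(real^'n) set \<Rightarrow> real" where
  "in_width S = Sup {w. w > 0 \<and> (\<exists>a. dcube a w \<subseteq> S)}"

definition out_width :: "(real^'n) set \<Rightarrow> real" where
  "out_width S = Inf {w. w > 0 \<and> (\<exists>a. S \<subseteq> dcube a w)}"

definition fat :: "real \<Rightarrow> (real^'n) set \<Rightarrow> bool" where
  "fat \<alpha> S \<longleftrightarrow> S \<noteq> {} \<and> bounded S \<and> open S \<and> out_width S \<le> \<alpha> * in_width S"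

definition grid :: "nat \<Rightarrow> (real^'n) set" where
  "grid N = {x. \<forall>i. x$i \<in> \<int> \<and> 0 < x$i \<and> x$i < real N}"

definition lev_int :: "int \<Rightarrow> nat" where
  "lev_int i = multiplicity (2::int) i"

definition lev_pt :: "real^'n \<Rightarrow> nat" where
  "lev_pt x = Min (range (\<lambda>i. lev_int \<lfloor>x$i\<rfloor>))"

definition lev_set :: "nat \<Rightarrow> (real^'n) set \<Rightarrow> nat" where
  "lev_set N S = Max (lev_pt ` (S \<inter> grid N))"

text \<open>State of ALG (the set P') before the j-th object (0-based) arrives.\<close>
fun alg_state :: "nat \<Rightarrow> (nat \<Rightarrow> (real^'n) set) \<Rightarrow> nat \<Rightarrow> (real^'n) set" where
  "alg_state N Os 0 = {}"
| "alg_state N Os (Suc j) =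
     (let P' = alg_state N Os j in
      if Os j \<inter> grid N \<inter> P' \<noteq> {} then P'
      else P' \<union> {x \<in> Os j \<inter> grid N. lev_pt x = lev_set N (Os j)})"

definition unhit :: "nat \<Rightarrow> (nat \<Rightarrow> (real^'n) set) \<Rightarrow> nat \<Rightarrow> nat set" where
  "unhit N Os m = {j. j < m \<and> Os j \<inter> grid N \<inter> alg_state N Os j = {}}"

end

theory Submission
  imports Defs
begin

lemma grid_int: "x \<in> grid N \<Longrightarrow> x$i = of_int \<lfloor>x$i\<rfloor> \<and> \<lfloor>x$i\<rfloor> > 0"
proof -
  assume "x \<in> grid N"
  then have "x$i \<in> \<int>" "0 < x$i" unfolding grid_def by auto
  then obtain k where k: "x$i = of_int k" by (auto elim!: Ints_cases)
  with \<open>0 < x$i\<close> show ?thesis by simp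
qed

lemma grid_finite: "finite (grid N :: (real^'n) set)"
proof -
  have "(grid N :: (real^'n) set) \<subseteq> (\<lambda>f. \<chi> i. real_of_int (f i)) ` (PiE UNIV (\<lambda>_. {0..int N}))"
  proof
    fix x :: "real^'n" assume x: "x \<in> grid N"
    have "x = (\<lambda>f. \<chi> i. real_of_int (f i)) (\<lambda>i. \<lfloor>x$i\<rfloor>)"
      using grid_int[OF x] by (simp add: vec_eq_iff)
    moreover have "(\<lambda>i. \<lfloor>x$i\<rfloor>) \<in> PiE UNIV (\<lambda>_. {0..int N})"
    proof -
      have "\<forall>i. 0 \<le> \<lfloor>x$i\<rfloor> \<and> \<lfloor>x$i\<rfloor> \<le> int N"
        proof
        fix i
        have "0 < x$i" "x$i < real N" using x unfolding grid_def by auto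
        then show "0 \<le> \<lfloor>x$i\<rfloor> \<and> \<lfloor>x$i\<rfloor> \<le> int N"
          by (metis floor_mono floor_of_nat less_imp_le of_nat_0 floor_of_nat)
      qed
      then show ?thesis by (simp add: PiE_UNIV_domain)
    qed
    ultimately show "x \<in> (\<lambda>f. \<chi> i. real_of_int (f i)) ` (PiE UNIV (\<lambda>_. {0..int N}))"
      by (rule image_eqI)
  qed
  then show ?thesis by (rule finite_subset) (intro finite_imageI finite_PiE, auto)
qed

lemma lev_pt_ge: "k \<le> lev_pt (x::real^'n) \<longleftrightarrow> (\<forall>i. k \<le> lev_int \<lfloor>x$i\<rfloor>)"
  unfolding lev_pt_def by (subst Min_ge_iff) auto

lemma state_mono: "j \<le> k \<Longrightarrow> alg_state N Os j \<subseteq> alg_state N Os k"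
proof (induction k)
  case 0 then show ?case by simp
next
  case (Suc k)
  then show ?case by (cases "j = Suc k") (auto simp: Let_def)
qed

lemma fin1d: "finite {k::int. \<bar>real_of_int k - c\<bar> \<le> r}"
proof -
  have "{k::int. \<bar>real_of_int k - c\<bar> \<le> r} \<subseteq> {\<lceil>c-r\<rceil>..\<lfloor>c+r\<rfloor>}"
    by (auto simp: abs_le_iff ceiling_le_iff le_floor_iff)
  then show ?thesis by (rule finite_subset) simp
qed

lemma count1d:
  assumes "r \<ge> 0"
  shows "real (card {k::int. \<bar>real_of_int k - c\<bar> \<le> r}) \<le> 2*r+1"
proof -
  have sub: "{k::int. \<bar>real_of_int k - c\<bar> \<le> r} \<subseteq> {\<lceil>c-r\<rceil>..\<lfloor>c+r\<rfloor>}"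
    by (auto simp: abs_le_iff ceiling_le_iff le_floor_iff)
  have "card {k::int. \<bar>real_of_int k - c\<bar> \<le> r} \<le> card {\<lceil>c-r\<rceil>..\<lfloor>c+r\<rfloor>}"
    by (rule card_mono[OF _ sub]) simp
  moreover have "real (card {\<lceil>c-r\<rceil>..\<lfloor>c+r\<rfloor>}) \<le> 2*r+1"
  proof -
    have "real (card {\<lceil>c-r\<rceil>..\<lfloor>c+r\<rfloor>}) = real (nat (\<lfloor>c+r\<rfloor> + 1 - \<lceil>c-r\<rceil>))" by simp
    also have "\<dots> \<le> 2*r+1"
    proof -
      have "real_of_int (\<lfloor>c+r\<rfloor> + 1 - \<lceil>c-r\<rceil>) \<le> 2*r+1"
        using of_int_floor_le[of "c+r"] le_of_int_ceiling[of "c-r"] by (simp del: of_int_floor_le le_of_int_ceiling)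
      then show ?thesis using assms
        by (cases "\<lfloor>c+r\<rfloor> + 1 - \<lceil>c-r\<rceil> \<ge> 0") auto
    qed
    finally show ?thesis .
  qed
  ultimately show ?thesis by linarith
qed

lemma in_width_ne:
  fixes S :: "(real^'n) set" and p :: "real^'n"
  assumes "open S" "p \<in> S"
  shows "\<exists>w>0. \<exists>a. dcube a w \<subseteq> S"
proof -
  obtain e where e: "e > 0" "ball p e \<subseteq> S" using assms open_contains_ball by blast
  define \<delta> where "\<delta> = e / (2 * real CARD('n))"
  have dpos: "\<delta> > 0" using e by (simp add: \<delta>_def)
  have "dcube (p - (\<chi> i. \<delta>)) \<delta> \<subseteq> ball p e"
  proof
    fix y assume y: "y \<in> dcube (p - (\<chi> i. \<delta>)) \<delta>"
    have "\<forall>i. \<bar>(p - y)$i\<bar> \<le> \<delta>"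
    proof
      fix i
      have "p$i - \<delta> \<le> y$i \<and> y$i \<le> p$i" using y by (simp add: dcube_def)
      then show "\<bar>(p - y)$i\<bar> \<le> \<delta>" by simp
    qed
    then have "sum (\<lambda>i. \<bar>(p - y)$i\<bar>) UNIV \<le> sum (\<lambda>i. \<delta>) (UNIV::'n set)"
      by (intro sum_mono) auto
    also have "\<dots> = e/2" by (simp add: \<delta>_def)
    finally have "norm (p - y) < e" using norm_le_l1_cart[of "p - y"] e by linarith
    then show "y \<in> ball p e" by (simp add: dist_norm)
  qed
  then show ?thesis using e dpos by blast
qed

lemma in_width_le:
  fixes S :: "(real^'n) set" and p :: "real^'n"
  assumes "open S" "p \<in> S" "S \<subseteq> {x. \<forall>i. 0 < x$i \<and> x$i < real N}"
    and lev: "\<And>x. x \<in> S \<inter> grid N \<Longrightarrow> lev_pt x \<le> l"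
  shows "in_width S \<le> 2^(l+1)"
  unfolding in_width_def
proof (rule cSup_least)
  show "{w. w > 0 \<and> (\<exists>a. dcube a w \<subseteq> S)} \<noteq> {}" using in_width_ne[OF assms(1,2)] by auto
next
  fix w assume "w \<in> {w. w > 0 \<and> (\<exists>a. dcube a w \<subseteq> S)}"
  then obtain a :: "real^'n" where a: "dcube a w \<subseteq> S" by auto
  show "w \<le> 2^(l+1)"
  proof (rule ccontr)
    assume "\<not> w \<le> 2^(l+1)"
    then have wl: "w > 2^(l+1)" by simp
    define M :: int where "M = 2^(l+1)"
    define x :: "real^'n" where "x = (\<chi> i. real_of_int (M * \<lceil>a$i / M\<rceil>))"
    have Mpos: "(0::real) < M" by (simp add: M_def)
    have "x \<in> dcube a w"
      unfolding dcube_def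
    proof (safe)
      fix i
      have c1: "a$i / M \<le> \<lceil>a$i / M\<rceil>" by simp
      have c2: "\<lceil>a$i / M\<rceil> < a$i / M + 1" by linarith
      have e1: "M * (a$i / M) = a$i" "M * (a$i / M + 1) = a$i + M" using Mpos by (simp_all add: field_simps)
      have "a$i \<le> M * \<lceil>a$i / M\<rceil>" using mult_left_mono[OF c1, of M] Mpos e1 by simp
      moreover have "M * \<lceil>a$i / M\<rceil> < a$i + M" using mult_strict_left_mono[OF c2 Mpos] e1 by simp
      moreover have "real_of_int M = 2^(l+1)" by (simp add: M_def)
      ultimately show "a$i \<le> x$i" "x$i \<le> a$i + w" using wl by (auto simp: x_def)
    qed
    then have xS: "x \<in> S" using a by auto
    then have xg: "x \<in> grid N" using assms(3) unfolding grid_def by (auto simp: x_def)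
    have "l + 1 \<le> lev_pt x"
      unfolding lev_pt_ge
    proof
      fix i
      have "x$i > 0" using xS assms(3) by auto
      then have nz: "M * \<lceil>a$i / M\<rceil> \<noteq> 0" by (auto simp: x_def)
      have "(2::int)^(l+1) dvd M * \<lceil>a$i / M\<rceil>" by (simp add: M_def)
      then have "l+1 \<le> multiplicity (2::int) (M * \<lceil>a$i / M\<rceil>)"
        using multiplicity_geI[of "M * \<lceil>a$i / M\<rceil>" 2 "l+1"] nz by auto
      moreover have "\<lfloor>x$i\<rfloor> = M * \<lceil>a$i / M\<rceil>" unfolding x_def
        by (metis floor_of_int vec_lambda_beta)
      ultimately show "l + 1 \<le> lev_int \<lfloor>x$i\<rfloor>" by (simp add: lev_int_def)
    qed
    with lev[of x] xS xg show False by auto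
  qed
qed

lemma out_width_ge:
  fixes S :: "(real^'n) set" and p q :: "real^'n"
  assumes "bounded S" "p \<in> S" "q \<in> S"
  shows "\<bar>q$i - p$i\<bar> \<le> out_width S"
  unfolding out_width_def
proof (rule cInf_greatest)
  obtain r where r: "\<forall>y\<in>S. norm y \<le> r" using assms(1) bounded_iff by blast
  define r' where "r' = \<bar>r\<bar> + 1"
  have "S \<subseteq> dcube (\<chi> i. - r') (2*r')"
  proof
    fix y assume "y \<in> S"
    then have yr: "\<And>i. \<bar>y$i\<bar> \<le> r" using r component_le_norm_cart order_trans by blast
    show "y \<in> dcube (\<chi> i. - r') (2*r')" unfolding dcube_def
    proof (safe)
      fix i show "(\<chi> i. - r')$i \<le> y$i" "y$i \<le> (\<chi> i. - r')$i + 2*r'"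
        using yr[of i] by (auto simp: r'_def abs_le_iff)
    qed
  qed
  moreover have "2*r' > 0" by (simp add: r'_def)
  ultimately show "{w. w > 0 \<and> (\<exists>a. S \<subseteq> dcube a w)} \<noteq> {}" by blast
next
  fix w assume "w \<in> {w. w > 0 \<and> (\<exists>a. S \<subseteq> dcube a w)}"
  then obtain a where "S \<subseteq> dcube a w" by auto
  then have "p \<in> dcube a w" "q \<in> dcube a w" using assms by auto
  then show "\<bar>q$i - p$i\<bar> \<le> w" unfolding dcube_def by (auto simp: abs_le_iff) (smt (verit))+
qed

theorem mainTheorem6:
  fixes Os :: "nat \<Rightarrow> (real^'n) set" and N m :: nat and \<alpha> :: real
  assumes "N \<ge> 2" and "\<alpha> \<ge> 1"
    and "\<And>j. j < m \<Longrightarrow> Os j \<subseteq> {x. \<forall>i. 0 < x$i \<and> x$i < real N}"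
    and "\<And>j. j < m \<Longrightarrow> fat \<alpha> (Os j)"
    and "\<And>j. j < m \<Longrightarrow> Os j \<inter> grid N \<noteq> {}"
  shows "\<forall>l p. p \<in> grid N \<longrightarrow>
     real (card {j \<in> unhit N Os m. lev_set N (Os j) = l \<and> p \<in> Os j}) \<le> (4 * \<alpha> + 1) ^ CARD('n)"
proof (intro allI impI)
  fix l and p :: "real^'n"
  assume pg: "p \<in> grid N"
  define J where "J = {j \<in> unhit N Os m. lev_set N (Os j) = l \<and> p \<in> Os j}"
  define q where "q j = (SOME x. x \<in> Os j \<inter> grid N \<and> lev_pt x = l)" for j
  define K :: real where "K = 2^l"
  have Kpos: "K > 0" by (simp add: K_def)
  have qprops: "q j \<in> Os j \<inter> grid N \<and> lev_pt (q j) = l \<and>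
      (\<forall>i. \<bar>q j $ i - p$i\<bar> \<le> \<alpha> * 2^(l+1)) \<and> (\<forall>i. of_int K' dvd \<lfloor>q j $ i\<rfloor>)"
    if j: "j \<in> J" and K'_def: "K' = (2::int)^l" for j K'
  proof -
    have jm: "j < m" and lj: "lev_set N (Os j) = l" and pj: "p \<in> Os j"
      using j by (auto simp: J_def unhit_def)
    have fin: "finite (Os j \<inter> grid N)" using grid_finite by blast
    have ne: "Os j \<inter> grid N \<noteq> {}" using assms(5)[OF jm] .
    have "lev_set N (Os j) \<in> lev_pt ` (Os j \<inter> grid N)"
      unfolding lev_set_def by (rule Max_in) (use fin ne in auto)
    then have ex: "\<exists>x. x \<in> Os j \<inter> grid N \<and> lev_pt x = l" using lj by auto
    have q1: "q j \<in> Os j \<inter> grid N \<and> lev_pt (q j) = l"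
      unfolding q_def by (rule someI_ex[OF ex])
    have levle: "lev_pt x \<le> l" if "x \<in> Os j \<inter> grid N" for x
      using lj unfolding lev_set_def using Max_ge[OF finite_imageI[OF fin]] that by auto
    have fat: "fat \<alpha> (Os j)" using assms(4)[OF jm] .
    then have op: "open (Os j)" and bd: "bounded (Os j)" and fw: "out_width (Os j) \<le> \<alpha> * in_width (Os j)"
      by (auto simp: fat_def)
    have iw: "in_width (Os j) \<le> 2^(l+1)"
      by (rule in_width_le[OF op pj assms(3)[OF jm] levle])
    have dist: "\<bar>q j $ i - p$i\<bar> \<le> \<alpha> * 2^(l+1)" for i
    proof -
      have "\<bar>q j $ i - p$i\<bar> \<le> out_width (Os j)" using out_width_ge[OF bd pj] q1 by auto
      also have "\<dots> \<le> \<alpha> * in_width (Os j)" by (rule fw)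
      also have "\<dots> \<le> \<alpha> * 2^(l+1)" using iw assms(2) by (intro mult_left_mono) auto
      finally show ?thesis .
    qed
    have dv: "of_int K' dvd \<lfloor>q j $ i\<rfloor>" for i
    proof -
      have "l \<le> lev_int \<lfloor>q j $ i\<rfloor>" using q1 lev_pt_ge[of l "q j"] by auto
      then show ?thesis unfolding K'_def lev_int_def by (simp add: multiplicity_dvd')
    qed
    show ?thesis using q1 dist dv by auto
  qed
  define \<phi> where "\<phi> x = (\<lambda>i. \<lfloor>(x::real^'n)$i\<rfloor> div 2^l)" for x
  have recover: "real_of_int (\<phi> (q j) i) * K = q j $ i" if "j \<in> J" for j i
  proof -
    have qp: "q j \<in> grid N" "(2::int)^l dvd \<lfloor>q j $ i\<rfloor>" using qprops[OF that refl] by auto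
    have "\<phi> (q j) i * 2^l = \<lfloor>q j $ i\<rfloor>" unfolding \<phi>_def using qp(2) by simp
    then have "real_of_int (\<phi> (q j) i * 2^l) = real_of_int \<lfloor>q j $ i\<rfloor>" by simp
    then show ?thesis using grid_int[OF qp(1), of i] by (simp add: K_def)
  qed
  define B where "B i = {k::int. \<bar>real_of_int k - p$i / K\<bar> \<le> 2*\<alpha>}" for i
  have maps: "\<phi> (q j) \<in> PiE UNIV B" if "j \<in> J" for j
  proof -
    have "\<phi> (q j) i \<in> B i" for i
    proof -
      have d: "\<bar>q j $ i - p$i\<bar> \<le> \<alpha> * 2^(l+1)" using qprops[OF that refl] by auto
      have "\<bar>real_of_int (\<phi> (q j) i) - p$i / K\<bar> * K = \<bar>q j $ i - p$i\<bar>"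
        using recover[OF that, of i] Kpos by (simp add: abs_mult[symmetric] field_simps)
      also have "\<dots> \<le> (2*\<alpha>) * K" using d by (simp add: K_def)
      finally show ?thesis unfolding B_def using Kpos by simp
    qed
    then show ?thesis by (simp add: PiE_UNIV_domain)
  qed
  have inj: "inj_on (\<lambda>j. \<phi> (q j)) J"
  proof (rule inj_onI)
    fix j1 j2 assume j1: "j1 \<in> J" and j2: "j2 \<in> J" and eq: "\<phi> (q j1) = \<phi> (q j2)"
    have qeq: "q j1 = q j2"
    proof (subst vec_eq_iff, rule allI)
      fix i
      show "q j1 $ i = q j2 $ i" using recover[OF j1, of i] recover[OF j2, of i] eq by simp
    qed
    have key: False if a: "a \<in> J" and b: "b \<in> J" and ab: "a < b" and qab: "q a = q b" for a b
    proof -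
      have ua: "Os a \<inter> grid N \<inter> alg_state N Os a = {}" and ub: "Os b \<inter> grid N \<inter> alg_state N Os b = {}"
        using a b by (auto simp: J_def unhit_def)
      have la: "lev_set N (Os a) = l" using a by (auto simp: J_def)
      have "q a \<in> alg_state N Os (Suc a)"
        using qprops[OF a refl] ua la by (auto simp: Let_def)
      also have "\<dots> \<subseteq> alg_state N Os b" using ab by (intro state_mono) simp
      finally have "q b \<in> alg_state N Os b" using qab by simp
      moreover have "q b \<in> Os b \<inter> grid N" using qprops[OF b refl] by auto
      ultimately show False using ub by blast
    qed
    show "j1 = j2"
    proof (rule ccontr)
      assume "j1 \<noteq> j2"
      then consider "j1 < j2" | "j2 < j1" by linarith
      then show False using key j1 j2 qeq by metis
    qed
  qed
  have finB: "finite (PiE UNIV B)" by (intro finite_PiE) (auto simp: B_def fin1d)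
  have "card J \<le> card (PiE UNIV B)"
    by (rule card_inj_on_le[OF inj _ finB]) (use maps in auto)
  then have "real (card J) \<le> real (card (PiE UNIV B))" by simp
  also have "\<dots> = (\<Prod>i\<in>UNIV. real (card (B i)))" by (simp add: card_PiE)
  also have "\<dots> \<le> (\<Prod>i\<in>(UNIV::'n set). 4*\<alpha>+1)"
  proof (rule prod_mono)
    fix i :: 'n
    have "real (card (B i)) \<le> 2*(2*\<alpha>)+1" unfolding B_def by (rule count1d) (use assms(2) in simp)
    then show "0 \<le> real (card (B i)) \<and> real (card (B i)) \<le> 4*\<alpha>+1" by simp
  qed
  also have "\<dots> = (4*\<alpha>+1)^CARD('n)" by simp
  finally show "real (card {j \<in> unhit N Os m. lev_set N (Os j) = l \<and> p \<in> Os j}) \<le> (4 * \<alpha> + 1) ^ CARD('n)"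
    unfolding J_def .
qed

end
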